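(* Let $\delta>0$ be a constant. Consider single-machine scheduling with all jobs available at time $0$, and suppose all predictions are underestimates, i.e. $\hat p_j \le p_j$ for every job $j$. Then PMLF with parameter $\delta$ is $(2+2\delta)$-competitive for minimizing the total completion time $\sum_j C_j$, and it preempts each job $j$ at most $O\big(\frac{1}{\delta}\log_2(p_j/\hat p_j)\big)$ times.
   Context: There are $n$ jobs, all available at time $0$, on a single machine that processes at most one job at a time at unit speed; preemption is allowed. Job $j$ has an unknown processing requirement $p_j \ge 1$ and completes (at time $C_j$) once it has received $p_j$ units of processing; $p_j$ is learned only at completion. For each job a prediction $\hat p_j>0$ is known in advance. A preemption of job $j$ is an interruption of its processing before it completes. An algorithm is $c$-competitive if on every instance its total completion time is at most $c$ times the minimum total completion time of an offline schedule that knows all $p_j$. PMLF (Predicted Multi-Level Feedback) with parameter $\delta>0$: maintain FIFO queues $Q_k$ indexed by integers $k$. Initially each job $j$ is placed into $Q_k$ with $k=\lfloor \log_{1+\delta}\hat p_j\rfloor$. At any time, the machine processes the front job of the non-empty queue of lowest index. Whenever a job $j\in Q_i$ has received total processing $(1+\delta)^{i+1}$ (without completing), it is removed from $Q_i$ and placed at the end of $Q_{i+1}$. *)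

theory Defs
  imports Complex_Main
begin

text \<open>A (preemptive) schedule is a finite list of consecutive pieces starting at time 0.
  A piece (Some j, d) processes job j for d time units, (None, d) is idle time of length d.\<close>

type_synonym schedule = "(nat option \<times> real) list"

definition seg_start :: "schedule \<Rightarrow> nat \<Rightarrow> real" where
  "seg_start S m = (\<Sum>l<m. snd (S ! l))"

definition seg_end :: "schedule \<Rightarrow> nat \<Rightarrow> real" where
  "seg_end S m = seg_start S m + snd (S ! m)"

definition total_len :: "schedule \<Rightarrow> real" where
  "total_len S = (\<Sum>m<length S. snd (S ! m))"

definition work :: "schedule \<Rightarrow> nat \<Rightarrow> real \<Rightarrow> real" where
  "work S j t = (\<Sum>m<length S. if fst (S ! m) = Some j
       then max 0 (min (snd (S ! m)) (t - seg_start S m)) else 0)"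

definition feasible :: "nat \<Rightarrow> (nat \<Rightarrow> real) \<Rightarrow> schedule \<Rightarrow> bool" where
  "feasible n p S \<longleftrightarrow> (\<forall>m<length S. 0 \<le> snd (S ! m)) \<and> (\<forall>j<n. p j \<le> work S j (total_len S))"

definition completion :: "schedule \<Rightarrow> (nat \<Rightarrow> real) \<Rightarrow> nat \<Rightarrow> real" where
  "completion S p j = Inf {t. 0 \<le> t \<and> p j \<le> work S j t}"

definition total_completion :: "nat \<Rightarrow> (nat \<Rightarrow> real) \<Rightarrow> schedule \<Rightarrow> real" where
  "total_completion n p S = (\<Sum>j<n. completion S p j)"

definition npreempt :: "schedule \<Rightarrow> (nat \<Rightarrow> real) \<Rightarrow> nat \<Rightarrow> nat" where
  "npreempt S p j = card {m. Suc m < length S \<and> fst (S ! m) = Some j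
      \<and> fst (S ! Suc m) \<noteq> Some j \<and> work S j (seg_end S m) < p j}"

text \<open>Initial queues: job j goes to Q_k with k = floor(log_{1+delta} ph_j); within a queue
  jobs are in the (arbitrary) FIFO order given by the list ord.\<close>
definition init_queues :: "real \<Rightarrow> (nat \<Rightarrow> real) \<Rightarrow> nat list \<Rightarrow> (int \<Rightarrow> nat list)" where
  "init_queues \<delta> ph ord = (\<lambda>k. filter (\<lambda>j. \<lfloor>log (1 + \<delta>) (ph j)\<rfloor> = k) ord)"

text \<open>State: queues, processing received so far, schedule built so far.\<close>
type_synonym pstate = "(int \<Rightarrow> nat list) \<times> (nat \<Rightarrow> real) \<times> schedule"

definition pmlf_step :: "real \<Rightarrow> (nat \<Rightarrow> real) \<Rightarrow> pstate \<Rightarrow> pstate" where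
  "pmlf_step \<delta> p st = (case st of (Q, r, S) \<Rightarrow>
     if \<forall>i. Q i = [] then (Q, r, S) else
     (let i = Min {i. Q i \<noteq> []}; j = hd (Q i); thr = (1 + \<delta>) powr real_of_int (i + 1) in
      if p j \<le> thr
      then (Q(i := tl (Q i)), r(j := p j), S @ [(Some j, p j - r j)])
      else (Q(i := tl (Q i), i + 1 := Q (i + 1) @ [j]), r(j := thr), S @ [(Some j, thr - r j)])))"

definition pmlf_state :: "real \<Rightarrow> (nat \<Rightarrow> real) \<Rightarrow> (nat \<Rightarrow> real) \<Rightarrow> nat list \<Rightarrow> nat \<Rightarrow> pstate" where
  "pmlf_state \<delta> p ph ord k = (pmlf_step \<delta> p ^^ k) (init_queues \<delta> ph ord, \<lambda>_. 0, [])"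

definition pmlf_done :: "pstate \<Rightarrow> bool" where
  "pmlf_done st \<longleftrightarrow> (\<forall>i. fst st i = [])"

definition pmlf_sched :: "pstate \<Rightarrow> schedule" where
  "pmlf_sched st = snd (snd st)"

end

theory Submission
  imports Defs "HOL-Analysis.Elementary_Metric_Spaces"
begin

definition wsum :: "schedule \<Rightarrow> nat \<Rightarrow> nat \<Rightarrow> real" where
  "wsum S x M = (\<Sum>m<M. if fst (S!m) = Some x then snd (S!m) else 0)"

definition mc :: "schedule \<Rightarrow> (nat \<Rightarrow> real) \<Rightarrow> nat \<Rightarrow> nat" where
  "mc S p x = card {m. m < length S \<and> fst (S!m) = Some x \<and> wsum S x (Suc m) < p x}"

definition nonneg :: "schedule \<Rightarrow> bool" where
  "nonneg S \<longleftrightarrow> (\<forall>m<length S. 0 \<le> snd (S!m))"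

lemma seg_start_Suc: "seg_start S (Suc m) = seg_start S m + snd (S!m)"
  by (simp add: seg_start_def)

lemma seg_start_mono:
  assumes "nonneg S" "m \<le> M" "M \<le> length S"
  shows "seg_start S m \<le> seg_start S M"
proof -
  have "seg_start S M = seg_start S m + (\<Sum>l\<in>{m..<M}. snd (S!l))"
    unfolding seg_start_def using assms(2)
    by (metis sum.lessThan_Suc_shift lessThan_atLeast0 sum.atLeastLessThan_concat zero_le)
  moreover have "(\<Sum>l\<in>{m..<M}. snd (S!l)) \<ge> 0"
    using assms by (intro sum_nonneg) (auto simp: nonneg_def)
  ultimately show ?thesis by simp
qed

lemma seg_start_nonneg: "nonneg S \<Longrightarrow> M \<le> length S \<Longrightarrow> 0 \<le> seg_start S M"
  using seg_start_mono[of S 0 M] by (simp add: seg_start_def)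

lemma work_seg_start:
  assumes "nonneg S" "M \<le> length S"
  shows "work S x (seg_start S M) = wsum S x M"
proof -
  have "work S x (seg_start S M) = (\<Sum>m<length S. if m < M then (if fst (S!m) = Some x then snd (S!m) else 0) else 0)"
    unfolding work_def
  proof (intro sum.cong refl)
    fix m assume m: "m \<in> {..<length S}"
    show "(if fst (S ! m) = Some x then max 0 (min (snd (S ! m)) (seg_start S M - seg_start S m)) else 0) =
         (if m < M then if fst (S ! m) = Some x then snd (S ! m) else 0 else 0)"
    proof (cases "m < M")
      case True
      have "seg_start S (Suc m) \<le> seg_start S M" using True assms by (intro seg_start_mono) auto
      moreover have "0 \<le> snd (S!m)" using assms m by (auto simp: nonneg_def)
      ultimately show ?thesis using True by (auto simp: seg_start_Suc)
    next
      case False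
      have "seg_start S M \<le> seg_start S m" using False assms m by (intro seg_start_mono) auto
      moreover have "0 \<le> snd (S!m)" using assms m by (auto simp: nonneg_def)
      ultimately show ?thesis using False by auto
    qed
  qed
  also have "\<dots> = wsum S x M"
    unfolding wsum_def using assms(2)
    by (simp add: sum.If_cases lessThan_def) (intro sum.cong, auto)
  finally show ?thesis .
qed

lemma clamp_sum:
  assumes "\<forall>m<M. 0 \<le> snd (S!m)" "0 \<le> t"
  shows "(\<Sum>m<M. max 0 (min (snd (S!m)) (t - seg_start S m))) = min (seg_start S M) t"
  using assms(1)
proof (induction M)
  case 0 then show ?case using assms(2) by (simp add: seg_start_def)
next
  case (Suc M)
  have "0 \<le> snd (S!M)" using Suc by auto
  then show ?case using Suc by (auto simp: seg_start_Suc)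
qed

lemma work_nonneg: "0 \<le> work S x t"
  unfolding work_def by (intro sum_nonneg) auto

lemma work_mono: "t \<le> t' \<Longrightarrow> work S x t \<le> work S x t'"
  unfolding work_def by (intro sum_mono) auto

lemma work_le_wsum: "nonneg S \<Longrightarrow> work S x t \<le> wsum S x (length S)"
  unfolding work_def wsum_def nonneg_def by (intro sum_mono) auto

lemma work_cont: "continuous_on UNIV (work S x)"
  unfolding work_def
proof (intro continuous_intros)
  fix m
  show "continuous_on UNIV (\<lambda>xa. if fst (S ! m) = Some x
          then max 0 (min (snd (S ! m)) (xa - seg_start S m)) else 0)"
    by (cases "fst (S ! m) = Some x") (auto intro!: continuous_intros)
qed

lemma sum_if_some: "finite A \<Longrightarrow> (\<Sum>k\<in>A. if e = Some k then c else 0) = (if \<exists>k\<in>A. e = Some k then c else (0::real))"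
  by (cases e) auto

lemma sum_work_le:
  assumes "nonneg S" "0 \<le> t"
  shows "(\<Sum>k<n. work S k t) \<le> t"
proof -
  have "(\<Sum>k<n. work S k t) = (\<Sum>m<length S. \<Sum>k<n. if fst (S!m) = Some k then max 0 (min (snd (S!m)) (t - seg_start S m)) else 0)"
    unfolding work_def by (rule sum.swap)
  also have "\<dots> \<le> (\<Sum>m<length S. max 0 (min (snd (S!m)) (t - seg_start S m)))"
    by (intro sum_mono) (simp add: sum_if_some)
  also have "\<dots> = min (seg_start S (length S)) t"
    using assms by (intro clamp_sum) (auto simp: nonneg_def)
  finally show ?thesis by simp
qed

lemma sum_work_eq:
  assumes "nonneg S" "0 \<le> t" "\<forall>m<length S. \<exists>x<n. fst (S!m) = Some x"
  shows "(\<Sum>k<n. work S k t) = min (total_len S) t"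
proof -
  have "(\<Sum>k<n. work S k t) = (\<Sum>m<length S. \<Sum>k<n. if fst (S!m) = Some k then max 0 (min (snd (S!m)) (t - seg_start S m)) else 0)"
    unfolding work_def by (rule sum.swap)
  also have "\<dots> = (\<Sum>m<length S. max 0 (min (snd (S!m)) (t - seg_start S m)))"
    using assms(3) by (intro sum.cong refl) (auto simp: sum_if_some)
  also have "\<dots> = min (seg_start S (length S)) t"
    using assms by (intro clamp_sum) (auto simp: nonneg_def)
  finally show ?thesis by (simp add: total_len_def seg_start_def)
qed

lemma wsum_append: "M \<le> length S \<Longrightarrow> wsum (S @ [e]) x M = wsum S x M"
  unfolding wsum_def by (intro sum.cong) (auto simp: nth_append)

lemma wsum_append_last: "wsum (S @ [e]) x (Suc (length S)) = wsum S x (length S) + (if fst e = Some x then snd e else 0)"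
proof -
  have "wsum (S @ [e]) x (length S) = wsum S x (length S)" by (rule wsum_append) simp
  then show ?thesis by (simp add: wsum_def nth_append)
qed

lemma wsum_take: "M \<le> length S \<Longrightarrow> wsum (take M S) x M = wsum S x M"
  unfolding wsum_def by (intro sum.cong) auto

lemma mc_append:
  "mc (S @ [e]) p x = mc S p x + (if fst e = Some x \<and> wsum S x (length S) + snd e < p x then 1 else 0)"
proof -
  let ?A = "{m. m < length S \<and> fst (S!m) = Some x \<and> wsum S x (Suc m) < p x}"
  have "{m. m < length (S@[e]) \<and> fst ((S@[e])!m) = Some x \<and> wsum (S@[e]) x (Suc m) < p x}
      = ?A \<union> (if fst e = Some x \<and> wsum S x (length S) + snd e < p x then {length S} else {})"
    by (auto simp: nth_append wsum_append wsum_append_last less_Suc_eq Suc_le_eq)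
  moreover have "finite ?A" by auto
  ultimately show ?thesis unfolding mc_def by (auto simp: card_insert_if)
qed

lemma completion_le:
  assumes "0 \<le> t" "p j \<le> work S j t"
  shows "completion S p j \<le> t" "0 \<le> completion S p j"
  unfolding completion_def using assms
  by (auto intro!: cInf_lower cInf_greatest bdd_belowI[where m=0])

lemma completion_in:
  assumes "0 \<le> t" "p j \<le> work S j t"
  shows "p j \<le> work S j (completion S p j)"
proof -
  have "closed {t. 0 \<le> t \<and> p j \<le> work S j t}"
    using work_cont[of S j]
    by (intro closed_Collect_conj closed_Collect_le) (auto intro: continuous_intros continuous_on_subset)
  then have "Inf {t. 0 \<le> t \<and> p j \<le> work S j t} \<in> {t. 0 \<le> t \<and> p j \<le> work S j t}"
    using assms by (intro closed_contains_Inf) (auto intro!: bdd_belowI[where m=0])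
  then show ?thesis unfolding completion_def by auto
qed


definition i0 :: "real \<Rightarrow> (nat \<Rightarrow> real) \<Rightarrow> nat \<Rightarrow> int" where
  "i0 \<delta> ph x = \<lfloor>log (1 + \<delta>) (ph x)\<rfloor>"

definition pinv :: "real \<Rightarrow> (nat \<Rightarrow> real) \<Rightarrow> (nat \<Rightarrow> real) \<Rightarrow> nat \<Rightarrow> (int \<Rightarrow> nat list) \<Rightarrow> (nat \<Rightarrow> real) \<Rightarrow> schedule \<Rightarrow> bool" where
  "pinv \<delta> p ph n Q r S \<longleftrightarrow>
  (\<forall>l. distinct (Q l)) \<and>
  (\<forall>l l' x. x \<in> set (Q l) \<longrightarrow> x \<in> set (Q l') \<longrightarrow> l = l') \<and>
  (\<forall>l x. x \<in> set (Q l) \<longrightarrow> x < n \<and> (1+\<delta>) powr real_of_int l \<le> p x \<and> r x \<le> (1+\<delta>) powr real_of_int l \<and> r x < p x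
        \<and> int (mc S p x) + i0 \<delta> ph x = l) \<and>
  (\<forall>x<n. (\<forall>l. x \<notin> set (Q l)) \<longrightarrow> r x = p x) \<and>
  finite {l. Q l \<noteq> []} \<and>
  (\<forall>l x l' y. x \<in> set (Q l) \<longrightarrow> y \<in> set (Q l') \<longrightarrow> r y \<le> (1+\<delta>) powr real_of_int (l+1)) \<and>
  (\<forall>m<length S. 0 \<le> snd (S!m) \<and> (\<exists>x<n. fst (S!m) = Some x)) \<and>
  (\<forall>x. r x = wsum S x (length S)) \<and>
  (\<forall>x<n. real_of_int (int (mc S p x) + i0 \<delta> ph x) \<le> log (1+\<delta>) (p x)) \<and>
  length S = (\<Sum>x<n. mc S p x + (if \<forall>l. x \<notin> set (Q l) then 1 else 0))"

lemma powr_int_mono: "(0::real) < \<delta> \<Longrightarrow> a \<le> b \<Longrightarrow> (1+\<delta>) powr real_of_int a \<le> (1+\<delta>) powr real_of_int b"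
  by (intro powr_mono) auto

lemma inv_init:
  assumes "\<delta> > 0" "\<forall>j<n. 1 \<le> p j \<and> 0 < ph j \<and> ph j \<le> p j" "distinct ord" "set ord = {..<n}"
  shows "pinv \<delta> p ph n (init_queues \<delta> ph ord) (\<lambda>_. 0) []"
proof -
  let ?Q = "init_queues \<delta> ph ord"
  have memQ: "x \<in> set (?Q l) \<longleftrightarrow> x < n \<and> i0 \<delta> ph x = l" for x l
    using assms(4) by (auto simp: init_queues_def i0_def)
  have mc0: "mc [] p x = 0" for x by (simp add: mc_def)
  have b1: "(1+\<delta>) powr real_of_int (i0 \<delta> ph x) \<le> ph x" if "x < n" for x
  proof -
    have "(1+\<delta>) powr real_of_int (i0 \<delta> ph x) \<le> (1+\<delta>) powr (log (1+\<delta>) (ph x))"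
      unfolding i0_def using assms(1) by (intro powr_mono) auto
    also have "\<dots> = ph x" using assms(1,2) that by simp
    finally show ?thesis .
  qed
  have b2: "real_of_int (i0 \<delta> ph x) \<le> log (1+\<delta>) (p x)" if "x < n" for x
  proof -
    have "real_of_int (i0 \<delta> ph x) \<le> log (1+\<delta>) (ph x)" unfolding i0_def by simp
    also have "\<dots> \<le> log (1+\<delta>) (p x)" using assms that by (subst log_le_cancel_iff) auto
    finally show ?thesis .
  qed
  have fin: "{l. ?Q l \<noteq> []} \<subseteq> i0 \<delta> ph ` {..<n}"
  proof
    fix l assume "l \<in> {l. ?Q l \<noteq> []}"
    then obtain x where "x \<in> set (?Q l)" by (cases "?Q l") auto
    then show "l \<in> i0 \<delta> ph ` {..<n}" using memQ by auto
  qed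
  show ?thesis unfolding pinv_def
  proof (intro conjI allI impI)
    show "finite {l. ?Q l \<noteq> []}" using fin finite_subset by blast
  next
    fix l show "distinct (?Q l)" using assms(3) by (simp add: init_queues_def)
  next
    fix x l
    assume "x \<in> set (?Q l)"
    then have x: "x < n" "i0 \<delta> ph x = l" using memQ by auto
    show "x < n" by fact
    show "(1+\<delta>) powr real_of_int l \<le> p x" using b1[OF x(1)] x assms(2) by force
    show "0 \<le> (1+\<delta>) powr real_of_int l" by simp
    show "0 < p x" using assms(2) x by force
    show "int (mc [] p x) + i0 \<delta> ph x = l" using x mc0 by simp
  qed (auto simp: memQ mc0 wsum_def assms(3) b2)
qed


lemma step_char:
  assumes pinv: "pinv \<delta> p ph n Q r S" and nd: "\<not> (\<forall>i. Q i = [])"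
  obtains i j where "Q i \<noteq> []" "j = hd (Q i)" "\<forall>l. Q l \<noteq> [] \<longrightarrow> i \<le> l" "j \<in> set (Q i)"
    "(p j \<le> (1+\<delta>) powr real_of_int (i+1) \<and>
       pmlf_step \<delta> p (Q,r,S) = (Q(i := tl (Q i)), r(j := p j), S @ [(Some j, p j - r j)]))
     \<or> (p j > (1+\<delta>) powr real_of_int (i+1) \<and>
       pmlf_step \<delta> p (Q,r,S) = (Q(i := tl (Q i), i + 1 := Q (i + 1) @ [j]),
           r(j := (1+\<delta>) powr real_of_int (i+1)), S @ [(Some j, (1+\<delta>) powr real_of_int (i+1) - r j)]))"
proof -
  define i where "i = Min {i. Q i \<noteq> []}"
  have fin: "finite {i. Q i \<noteq> []}" using pinv by (simp add: pinv_def)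
  have ne: "{i. Q i \<noteq> []} \<noteq> {}" using nd by auto
  have qi: "Q i \<noteq> []" using Min_in[OF fin ne] i_def by auto
  have mn: "\<forall>l. Q l \<noteq> [] \<longrightarrow> i \<le> l" using Min_le[OF fin] i_def by auto
  have jin: "hd (Q i) \<in> set (Q i)" using qi by simp
  show ?thesis
    apply (rule that[OF qi refl mn jin])
    using nd by (auto simp: pmlf_step_def Let_def i_def[symmetric])
qed

lemma sum_plus_delta:
  assumes "j < (n::nat)" "\<And>x. x < n \<Longrightarrow> f' x = f x + (if x = j then 1 else 0)"
  shows "(\<Sum>x<n. f' x) = (\<Sum>x<n. f x) + (1::nat)"
proof -
  have "(\<Sum>x<n. f' x) = (\<Sum>x<n. f x + (if x = j then 1 else 0))" using assms(2) by simp
  also have "\<dots> = (\<Sum>x<n. f x) + 1" using assms(1) by (simp add: sum.distrib)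
  finally show ?thesis .
qed

lemma inv_step_A:
  assumes pinv: "pinv \<delta> p ph n Q r S" and d: "\<delta> > 0"
    and qi: "Q i \<noteq> []" and jdef: "j = hd (Q i)" and mn: "\<forall>l. Q l \<noteq> [] \<longrightarrow> i \<le> l"
    and pj: "p j \<le> (1+\<delta>) powr real_of_int (i+1)"
  shows "pinv \<delta> p ph n (Q(i := tl (Q i))) (r(j := p j)) (S @ [(Some j, p j - r j)])"
    and "\<And>x l. x \<in> set ((Q(i := tl (Q i))) l) \<longleftrightarrow> x \<in> set (Q l) \<and> x \<noteq> j"
proof -
  let ?Q = "Q(i := tl (Q i))" and ?r = "r(j := p j)" and ?S = "S @ [(Some j, p j - r j)]"
  have D: "\<forall>l. distinct (Q l)" and U: "\<forall>l l' x. x \<in> set (Q l) \<longrightarrow> x \<in> set (Q l') \<longrightarrow> l = l'"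
    and I3: "\<forall>l x. x \<in> set (Q l) \<longrightarrow> x < n \<and> (1+\<delta>) powr real_of_int l \<le> p x \<and> r x \<le> (1+\<delta>) powr real_of_int l \<and> r x < p x
        \<and> int (mc S p x) + i0 \<delta> ph x = l"
    and I4: "\<forall>x<n. (\<forall>l. x \<notin> set (Q l)) \<longrightarrow> r x = p x"
    and F: "finite {l. Q l \<noteq> []}"
    and I6: "\<forall>l x l' y. x \<in> set (Q l) \<longrightarrow> y \<in> set (Q l') \<longrightarrow> r y \<le> (1+\<delta>) powr real_of_int (l+1)"
    and I7: "\<forall>m<length S. 0 \<le> snd (S!m) \<and> (\<exists>x<n. fst (S!m) = Some x)"
    and I8: "\<forall>x. r x = wsum S x (length S)"
    and I10: "\<forall>x<n. real_of_int (int (mc S p x) + i0 \<delta> ph x) \<le> log (1+\<delta>) (p x)"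
    and I11: "length S = (\<Sum>x<n. mc S p x + (if \<forall>l. x \<notin> set (Q l) then 1 else 0))"
    using pinv unfolding pinv_def apply - by (elim conjE, assumption)+
  have Qi: "Q i = j # tl (Q i)" using qi jdef by simp
  have jin: "j \<in> set (Q i)" using qi jdef by simp
  have jn: "j \<notin> set (tl (Q i))" using D Qi by (metis distinct.simps(2))
  show mem: "x \<in> set (?Q l) \<longleftrightarrow> x \<in> set (Q l) \<and> x \<noteq> j" for x l
  proof (cases "l = i")
    case True
    have "set (Q i) = insert j (set (tl (Q i)))" using Qi by (metis list.set(2))
    then show ?thesis using True jn by auto
  next
    case False
    then show ?thesis using U jin by auto
  qed
  have j3: "j < n" "r j < p j" "r j \<le> (1+\<delta>) powr real_of_int i" using I3 jin by blast+
  have mcS: "mc ?S p x = mc S p x" for x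
    using I8 by (auto simp: mc_append)
  have w: "wsum ?S x (length ?S) = ?r x" for x
    using I8 wsum_append_last[of S "(Some j, p j - r j)" x] by auto
  have inq: "(\<forall>l. x \<notin> set (?Q l)) \<longleftrightarrow> (\<forall>l. x \<notin> set (Q l)) \<or> x = j" for x
    using mem jin by blast
  show "pinv \<delta> p ph n ?Q ?r ?S"
    unfolding pinv_def
  proof (intro conjI)
    show "\<forall>l. distinct (?Q l)" using D by (simp add: distinct_tl)
    show "\<forall>l l' x. x \<in> set (?Q l) \<longrightarrow> x \<in> set (?Q l') \<longrightarrow> l = l'" using U mem by blast
    show "\<forall>l x. x \<in> set (?Q l) \<longrightarrow> x < n \<and> (1+\<delta>) powr real_of_int l \<le> p x \<and> ?r x \<le> (1+\<delta>) powr real_of_int l \<and> ?r x < p x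
        \<and> int (mc ?S p x) + i0 \<delta> ph x = l" using I3 mem mcS by auto
    show "\<forall>x<n. (\<forall>l. x \<notin> set (?Q l)) \<longrightarrow> ?r x = p x" using I4 inq by auto
    show "finite {l. ?Q l \<noteq> []}"
      by (rule finite_subset[OF _ F]) (use qi in auto)
    show "\<forall>l x l' y. x \<in> set (?Q l) \<longrightarrow> y \<in> set (?Q l') \<longrightarrow> ?r y \<le> (1+\<delta>) powr real_of_int (l+1)"
      using I6 mem by auto
    show "\<forall>m<length ?S. 0 \<le> snd (?S!m) \<and> (\<exists>x<n. fst (?S!m) = Some x)"
      using I7 j3 by (auto simp: nth_append less_Suc_eq)
    show "\<forall>x. ?r x = wsum ?S x (length ?S)" using w by simp
    show "\<forall>x<n. real_of_int (int (mc ?S p x) + i0 \<delta> ph x) \<le> log (1+\<delta>) (p x)" using I10 mcS by simp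
    have jq: "\<not> (\<forall>l. j \<notin> set (Q l))" using jin by blast
    show "length ?S = (\<Sum>x<n. mc ?S p x + (if \<forall>l. x \<notin> set (?Q l) then 1 else 0))"
      apply (subst sum_plus_delta[OF j3(1), of _ "\<lambda>x. mc S p x + (if \<forall>l. x \<notin> set (Q l) then 1 else 0)"])
      using jq inq mcS I11 by auto
  qed
qed

lemma inv_step_B:
  assumes pinv: "pinv \<delta> p ph n Q r S" and d: "\<delta> > 0"
    and qi: "Q i \<noteq> []" and jdef: "j = hd (Q i)" and mn: "\<forall>l. Q l \<noteq> [] \<longrightarrow> i \<le> l"
    and pj: "p j > (1+\<delta>) powr real_of_int (i+1)"
  shows "pinv \<delta> p ph n (Q(i := tl (Q i), i + 1 := Q (i + 1) @ [j]))
           (r(j := (1+\<delta>) powr real_of_int (i+1))) (S @ [(Some j, (1+\<delta>) powr real_of_int (i+1) - r j)])"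
    and "\<And>x l. x \<in> set ((Q(i := tl (Q i), i + 1 := Q (i + 1) @ [j])) l) \<longleftrightarrow> (x \<in> set (Q l) \<and> x \<noteq> j) \<or> (x = j \<and> l = i + 1)"
proof -
  define T where "T = (1+\<delta>) powr real_of_int (i+1)"
  let ?Q = "Q(i := tl (Q i), i + 1 := Q (i + 1) @ [j])" and ?r = "r(j := T)" and ?S = "S @ [(Some j, T - r j)]"
  have D: "\<forall>l. distinct (Q l)" and U: "\<forall>l l' x. x \<in> set (Q l) \<longrightarrow> x \<in> set (Q l') \<longrightarrow> l = l'"
    and I3: "\<forall>l x. x \<in> set (Q l) \<longrightarrow> x < n \<and> (1+\<delta>) powr real_of_int l \<le> p x \<and> r x \<le> (1+\<delta>) powr real_of_int l \<and> r x < p x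
        \<and> int (mc S p x) + i0 \<delta> ph x = l"
    and I4: "\<forall>x<n. (\<forall>l. x \<notin> set (Q l)) \<longrightarrow> r x = p x"
    and F: "finite {l. Q l \<noteq> []}"
    and I6: "\<forall>l x l' y. x \<in> set (Q l) \<longrightarrow> y \<in> set (Q l') \<longrightarrow> r y \<le> (1+\<delta>) powr real_of_int (l+1)"
    and I7: "\<forall>m<length S. 0 \<le> snd (S!m) \<and> (\<exists>x<n. fst (S!m) = Some x)"
    and I8: "\<forall>x. r x = wsum S x (length S)"
    and I10: "\<forall>x<n. real_of_int (int (mc S p x) + i0 \<delta> ph x) \<le> log (1+\<delta>) (p x)"
    and I11: "length S = (\<Sum>x<n. mc S p x + (if \<forall>l. x \<notin> set (Q l) then 1 else 0))"
    using pinv unfolding pinv_def apply - by (elim conjE, assumption)+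
  have Qi: "Q i = j # tl (Q i)" using qi jdef by simp
  have jin: "j \<in> set (Q i)" using qi jdef by simp
  have jn: "j \<notin> set (tl (Q i))" using D Qi by (metis distinct.simps(2))
  have jn1: "j \<notin> set (Q (i+1))" using U jin by fastforce
  show mem: "x \<in> set (?Q l) \<longleftrightarrow> (x \<in> set (Q l) \<and> x \<noteq> j) \<or> (x = j \<and> l = i + 1)" for x l
  proof (cases "l = i")
    case True
    have "set (Q i) = insert j (set (tl (Q i)))" using Qi by (metis list.set(2))
    then show ?thesis using True jn by auto
  next
    case False
    then show ?thesis using U jin by auto
  qed
  have j3: "j < n" "r j < p j" "r j \<le> (1+\<delta>) powr real_of_int i" "int (mc S p j) + i0 \<delta> ph j = i" using I3 jin by blast+
  have Tge: "(1+\<delta>) powr real_of_int i \<le> T" unfolding T_def using d by (intro powr_int_mono) auto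
  have mcS: "mc ?S p x = mc S p x + (if x = j then 1 else 0)" for x
    using I8 pj by (auto simp: mc_append T_def)
  have w: "wsum ?S x (length ?S) = ?r x" for x
    using I8 wsum_append_last[of S "(Some j, T - r j)" x] by auto
  have inq: "(\<forall>l. x \<notin> set (?Q l)) \<longleftrightarrow> (\<forall>l. x \<notin> set (Q l))" for x
    using mem jin by blast
  have minl: "i \<le> l" if "x \<in> set (?Q l)" for x l
  proof -
    have "x \<in> set (Q l) \<or> (x = j \<and> l = i + 1)" using that mem by blast
    then show ?thesis
    proof
      assume "x \<in> set (Q l)"
      then have "Q l \<noteq> []" by auto
      then show ?thesis using mn by blast
    qed simp
  qed
  show "pinv \<delta> p ph n ?Q ?r ?S"
    unfolding pinv_def
  proof (intro conjI)
    show "\<forall>l. distinct (?Q l)" using D jn1 by (simp add: distinct_tl)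
    show "\<forall>l l' x. x \<in> set (?Q l) \<longrightarrow> x \<in> set (?Q l') \<longrightarrow> l = l'" using U mem by blast
    show "\<forall>l x. x \<in> set (?Q l) \<longrightarrow> x < n \<and> (1+\<delta>) powr real_of_int l \<le> p x \<and> ?r x \<le> (1+\<delta>) powr real_of_int l \<and> ?r x < p x
        \<and> int (mc ?S p x) + i0 \<delta> ph x = l"
    proof (intro allI impI)
      fix l x assume "x \<in> set (?Q l)"
      then consider "x \<in> set (Q l)" "x \<noteq> j" | "x = j" "l = i + 1" using mem by blast
      then show "x < n \<and> (1+\<delta>) powr real_of_int l \<le> p x \<and> ?r x \<le> (1+\<delta>) powr real_of_int l \<and> ?r x < p x
        \<and> int (mc ?S p x) + i0 \<delta> ph x = l"
      proof cases
        case 1 then show ?thesis using I3 mcS by auto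
      next
        case 2 then show ?thesis using j3 pj mcS by (auto simp: T_def)
      qed
    qed
    show "\<forall>x<n. (\<forall>l. x \<notin> set (?Q l)) \<longrightarrow> ?r x = p x" using I4 inq jin by auto
    show "finite {l. ?Q l \<noteq> []}"
      by (rule finite_subset[of _ "insert (i+1) {l. Q l \<noteq> []}"]) (use F qi in auto)
    show "\<forall>l x l' y. x \<in> set (?Q l) \<longrightarrow> y \<in> set (?Q l') \<longrightarrow> ?r y \<le> (1+\<delta>) powr real_of_int (l+1)"
    proof (intro allI impI)
      fix l x l' y assume xin: "x \<in> set (?Q l)" and yin: "y \<in> set (?Q l')"
      show "?r y \<le> (1+\<delta>) powr real_of_int (l+1)"
      proof (cases "y = j")
        case True
        have "i \<le> l" using minl xin by blast
        then show ?thesis using True d unfolding T_def by (auto intro: powr_int_mono)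
      next
        case False
        then have y: "y \<in> set (Q l')" using yin mem by blast
        show ?thesis
        proof (cases "x \<in> set (Q l) \<and> x \<noteq> j")
          case True then show ?thesis using I6 y False by auto
        next
          case False2: False
          then have "x = j" "l = i + 1" using xin mem by blast+
          then have "r y \<le> (1+\<delta>) powr real_of_int (i+1)" using I6 y jin by blast
          also have "\<dots> \<le> (1+\<delta>) powr real_of_int (l+1)" using d \<open>l = i+1\<close> by (intro powr_int_mono) auto
          finally show ?thesis using False by simp
        qed
      qed
    qed
    show "\<forall>m<length ?S. 0 \<le> snd (?S!m) \<and> (\<exists>x<n. fst (?S!m) = Some x)"
      using I7 j3 Tge by (auto simp: nth_append less_Suc_eq)
    show "\<forall>x. ?r x = wsum ?S x (length ?S)" using w by simp
    show "\<forall>x<n. real_of_int (int (mc ?S p x) + i0 \<delta> ph x) \<le> log (1+\<delta>) (p x)"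
    proof (intro allI impI)
      fix x assume xn: "x < n"
      show "real_of_int (int (mc ?S p x) + i0 \<delta> ph x) \<le> log (1+\<delta>) (p x)"
      proof (cases "x = j")
        case False then show ?thesis using I10 xn mcS by simp
      next
        case True
        have pp: "0 < p j" by (rule le_less_trans[OF _ pj]) simp
        have "real_of_int (i + 1) < log (1+\<delta>) (p j)"
          using pj d pp by (subst less_log_iff) (auto simp: powr_real_of_int' T_def)
        then show ?thesis using True mcS j3(4) by simp
      qed
    qed
    show "length ?S = (\<Sum>x<n. mc ?S p x + (if \<forall>l. x \<notin> set (?Q l) then 1 else 0))"
      apply (subst sum_plus_delta[OF j3(1), of _ "\<lambda>x. mc S p x + (if \<forall>l. x \<notin> set (Q l) then 1 else 0)"])
      using inq mcS I11 by auto
  qed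
qed


lemma wsum_prefix: "M \<le> length S \<Longrightarrow> wsum (S @ ys) x M = wsum S x M"
  unfolding wsum_def by (intro sum.cong) (auto simp: nth_append)

lemma one_step:
  assumes inv: "pinv \<delta> p ph n Q r S" and d: "\<delta> > 0" and nd: "\<not> (\<forall>i. Q i = [])"
  obtains i j Q' r' S' where "pmlf_step \<delta> p (Q,r,S) = (Q',r',S')" "pinv \<delta> p ph n Q' r' S'"
    "Q i \<noteq> []" "j = hd (Q i)" "j \<in> set (Q i)" "\<forall>l. Q l \<noteq> [] \<longrightarrow> i \<le> l"
    "\<exists>e. S' = S @ [e]"
    "\<forall>x. (\<exists>l. x \<in> set (Q' l)) \<longleftrightarrow> (\<exists>l. x \<in> set (Q l)) \<and> (x \<noteq> j \<or> p j > (1+\<delta>) powr real_of_int (i+1))"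
    "\<forall>x. x \<noteq> j \<longrightarrow> r' x = r x"
    "p j \<le> (1+\<delta>) powr real_of_int (i+1) \<longrightarrow> r' j = p j"
proof -
  obtain i j where qi: "Q i \<noteq> []" and jd: "j = hd (Q i)" and mn: "\<forall>l. Q l \<noteq> [] \<longrightarrow> i \<le> l"
    and jin: "j \<in> set (Q i)"
    and cs: "(p j \<le> (1+\<delta>) powr real_of_int (i+1) \<and>
       pmlf_step \<delta> p (Q,r,S) = (Q(i := tl (Q i)), r(j := p j), S @ [(Some j, p j - r j)]))
     \<or> (p j > (1+\<delta>) powr real_of_int (i+1) \<and>
       pmlf_step \<delta> p (Q,r,S) = (Q(i := tl (Q i), i + 1 := Q (i + 1) @ [j]),
           r(j := (1+\<delta>) powr real_of_int (i+1)), S @ [(Some j, (1+\<delta>) powr real_of_int (i+1) - r j)]))"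
    using step_char[OF inv nd] by metis
  from cs show ?thesis
  proof
    assume A: "p j \<le> (1+\<delta>) powr real_of_int (i+1) \<and>
       pmlf_step \<delta> p (Q,r,S) = (Q(i := tl (Q i)), r(j := p j), S @ [(Some j, p j - r j)])"
    note I = inv_step_A[OF inv d qi jd mn conjunct1[OF A]]
    show ?thesis
      apply (rule that[OF conjunct2[OF A] I(1) qi jd jin mn])
      using I(2) A jin by auto
  next
    assume B: "p j > (1+\<delta>) powr real_of_int (i+1) \<and>
       pmlf_step \<delta> p (Q,r,S) = (Q(i := tl (Q i), i + 1 := Q (i + 1) @ [j]),
           r(j := (1+\<delta>) powr real_of_int (i+1)), S @ [(Some j, (1+\<delta>) powr real_of_int (i+1) - r j)])"
    note I = inv_step_B[OF inv d qi jd mn conjunct1[OF B]]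
    show ?thesis
      apply (rule that[OF conjunct2[OF B] I(1) qi jd jin mn])
      using I(2) B jin by auto
  qed
qed

lemma pinvD:
  assumes "pinv \<delta> p ph n Q r S"
  shows "\<forall>l. distinct (Q l)"
  "\<forall>l l' x. x \<in> set (Q l) \<longrightarrow> x \<in> set (Q l') \<longrightarrow> l = l'"
  "\<forall>l x. x \<in> set (Q l) \<longrightarrow> x < n \<and> (1+\<delta>) powr real_of_int l \<le> p x \<and> r x \<le> (1+\<delta>) powr real_of_int l \<and> r x < p x
        \<and> int (mc S p x) + i0 \<delta> ph x = l"
  "\<forall>x<n. (\<forall>l. x \<notin> set (Q l)) \<longrightarrow> r x = p x"
  "finite {l. Q l \<noteq> []}"
  "\<forall>l x l' y. x \<in> set (Q l) \<longrightarrow> y \<in> set (Q l') \<longrightarrow> r y \<le> (1+\<delta>) powr real_of_int (l+1)"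
  "\<forall>m<length S. 0 \<le> snd (S!m) \<and> (\<exists>x<n. fst (S!m) = Some x)"
  "\<forall>x. r x = wsum S x (length S)"
  "\<forall>x<n. real_of_int (int (mc S p x) + i0 \<delta> ph x) \<le> log (1+\<delta>) (p x)"
  "length S = (\<Sum>x<n. mc S p x + (if \<forall>l. x \<notin> set (Q l) then 1 else 0))"
  using assms unfolding pinv_def apply - by (elim conjE, assumption)+

lemma step_done: "pmlf_done x \<Longrightarrow> pmlf_step \<delta> p x = x"
  by (cases x) (auto simp: pmlf_step_def pmlf_done_def)

lemma exists_change: "P (0::nat) \<Longrightarrow> \<not> P K \<Longrightarrow> \<exists>a<K. P a \<and> \<not> P (Suc a)"
proof (induction K)
  case 0 then show ?case by simp
next
  case (Suc K)
  then show ?case by (cases "P K") (auto intro: less_SucI)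
qed

context
  fixes \<delta> :: real and p ph :: "nat \<Rightarrow> real" and n :: nat and ord :: "nat list"
  assumes dpos: "\<delta> > 0" and pj: "\<forall>j<n. 1 \<le> p j \<and> 0 < ph j \<and> ph j \<le> p j"
    and dist: "distinct ord" and setord: "set ord = {..<n}"
begin

abbreviation "st s \<equiv> pmlf_state \<delta> p ph ord s"
abbreviation "Qs s \<equiv> fst (st s)"
abbreviation "rs s \<equiv> fst (snd (st s))"
abbreviation "Ss s \<equiv> snd (snd (st s))"
abbreviation "inQ s x \<equiv> \<exists>l. x \<in> set (Qs s l)"

lemma st_Suc: "st (Suc s) = pmlf_step \<delta> p (st s)"
  by (simp add: pmlf_state_def)

lemma pinv_all: "pinv \<delta> p ph n (Qs s) (rs s) (Ss s)"
proof (induction s)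
  case 0
  show ?case using inv_init[OF dpos pj dist setord] by (simp add: pmlf_state_def)
next
  case (Suc s)
  obtain Q r S where e: "st s = (Q, r, S)" by (cases "st s") auto
  show ?case
  proof (cases "\<forall>i. Q i = []")
    case True
    then have "st (Suc s) = st s" using step_done[of "st s" \<delta> p] e by (simp add: st_Suc pmlf_done_def)
    then show ?thesis using Suc by simp
  next
    case False
    have inv: "pinv \<delta> p ph n Q r S" using Suc e by simp
    obtain Q' r' S' where "pmlf_step \<delta> p (Q,r,S) = (Q',r',S')" "pinv \<delta> p ph n Q' r' S'"
      using one_step[OF inv dpos False] by metis
    then show ?thesis using e by (simp add: st_Suc)
  qed
qed

lemma done_iff: "pmlf_done (st s) \<longleftrightarrow> (\<forall>i. Qs s i = [])"
  by (simp add: pmlf_done_def)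

lemma done_stay: "pmlf_done (st s) \<Longrightarrow> st (s + d) = st s"
proof (induction d)
  case 0 then show ?case by simp
next
  case (Suc d)
  then show ?case using step_done[of "st s" \<delta> p] by (simp add: st_Suc)
qed

lemma done_stay': "pmlf_done (st s) \<Longrightarrow> s \<le> t \<Longrightarrow> st t = st s"
  using done_stay[of s "t - s"] by simp

lemma step_facts:
  assumes "\<not> pmlf_done (st s)"
  obtains i j where "Qs s i \<noteq> []" "j = hd (Qs s i)" "j \<in> set (Qs s i)" "\<forall>l. Qs s l \<noteq> [] \<longrightarrow> i \<le> l"
    "\<exists>e. Ss (Suc s) = Ss s @ [e]"
    "\<forall>x. inQ (Suc s) x \<longleftrightarrow> inQ s x \<and> (x \<noteq> j \<or> p j > (1+\<delta>) powr real_of_int (i+1))"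
    "\<forall>x. x \<noteq> j \<longrightarrow> rs (Suc s) x = rs s x"
    "p j \<le> (1+\<delta>) powr real_of_int (i+1) \<longrightarrow> rs (Suc s) j = p j"
proof -
  obtain Q r S where e: "st s = (Q, r, S)" by (cases "st s") auto
  have inv: "pinv \<delta> p ph n Q r S" using pinv_all[of s] e by simp
  have nd: "\<not> (\<forall>i. Q i = [])" using assms e by (simp add: pmlf_done_def)
  obtain i j Q' r' S' where
    1: "pmlf_step \<delta> p (Q,r,S) = (Q',r',S')" and
    2: "Q i \<noteq> []" "j = hd (Q i)" "j \<in> set (Q i)" "\<forall>l. Q l \<noteq> [] \<longrightarrow> i \<le> l"
    "\<exists>e. S' = S @ [e]"
    "\<forall>x. (\<exists>l. x \<in> set (Q' l)) \<longleftrightarrow> (\<exists>l. x \<in> set (Q l)) \<and> (x \<noteq> j \<or> p j > (1+\<delta>) powr real_of_int (i+1))"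
    "\<forall>x. x \<noteq> j \<longrightarrow> r' x = r x"
    "p j \<le> (1+\<delta>) powr real_of_int (i+1) \<longrightarrow> r' j = p j"
    by (rule one_step[OF inv dpos nd])
  have e2: "st (Suc s) = (Q', r', S')" using 1 e by (simp add: st_Suc)
  show ?thesis
    by (rule that[of i j]) (use 2 e e2 in simp_all)
qed

lemma step_grow: "\<not> pmlf_done (st s) \<Longrightarrow> \<exists>e. Ss (Suc s) = Ss s @ [e]"
  by (rule step_facts) assumption+

lemma sched_grow: "s \<le> t \<Longrightarrow> \<exists>ys. Ss t = Ss s @ ys"
proof (induction t rule: dec_induct)
  case base then show ?case by simp
next
  case (step t)
  then obtain ys where ys: "Ss t = Ss s @ ys" by blast
  show ?case
  proof (cases "pmlf_done (st t)")
    case True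
    then have "st (Suc t) = st t" using step_done[of "st t" \<delta> p] by (simp add: st_Suc)
    then show ?thesis using ys by simp
  next
    case False
    then obtain e where "Ss (Suc t) = Ss t @ [e]" using step_grow by blast
    then show ?thesis using ys by auto
  qed
qed

lemma len_sched: "(\<forall>s'<s. \<not> pmlf_done (st s')) \<Longrightarrow> length (Ss s) = s"
proof (induction s)
  case 0 then show ?case by (simp add: pmlf_state_def)
next
  case (Suc s)
  then have "\<not> pmlf_done (st s)" by simp
  then obtain e where "Ss (Suc s) = Ss s @ [e]" using step_grow by blast
  then show ?case using Suc by simp
qed

lemma terminates: "\<exists>K. pmlf_done (st K)"
proof (rule ccontr)
  assume nt: "\<not> (\<exists>K. pmlf_done (st K))"
  define Bd where "Bd = (\<Sum>x<n. nat (\<lfloor>log (1+\<delta>) (p x)\<rfloor> - i0 \<delta> ph x) + 1)"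
  define s where "s = Suc Bd"
  have len: "length (Ss s) = s" using nt len_sched by blast
  have inv: "pinv \<delta> p ph n (Qs s) (rs s) (Ss s)" by (rule pinv_all)
  have mcb: "mc (Ss s) p x \<le> nat (\<lfloor>log (1+\<delta>) (p x)\<rfloor> - i0 \<delta> ph x)" if "x < n" for x
  proof -
    have "real_of_int (int (mc (Ss s) p x) + i0 \<delta> ph x) \<le> log (1+\<delta>) (p x)"
      using pinvD(9)[OF inv] that by blast
    then have "int (mc (Ss s) p x) + i0 \<delta> ph x \<le> \<lfloor>log (1+\<delta>) (p x)\<rfloor>"
      by (simp add: le_floor_iff)
    then show ?thesis by linarith
  qed
  have "length (Ss s) = (\<Sum>x<n. mc (Ss s) p x + (if \<forall>l. x \<notin> set (Qs s l) then 1 else 0))"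
    using pinvD(10)[OF inv] .
  also have "\<dots> \<le> Bd" unfolding Bd_def
  proof (intro sum_mono)
    fix x assume "x \<in> {..<n}"
    then have "mc (Ss s) p x \<le> nat (\<lfloor>log (1+\<delta>) (p x)\<rfloor> - i0 \<delta> ph x)" using mcb by simp
    then show "mc (Ss s) p x + (if \<forall>l. x \<notin> set (Qs s l) then 1 else 0)
        \<le> nat (\<lfloor>log (1+\<delta>) (p x)\<rfloor> - i0 \<delta> ph x) + 1" by simp
  qed
  finally show False using len s_def by simp
qed

lemma no_reentry: "\<not> inQ s x \<Longrightarrow> \<not> inQ (Suc s) x"
proof (cases "pmlf_done (st s)")
  case True
  then have "st (Suc s) = st s" using step_done[of "st s" \<delta> p] by (simp add: st_Suc)
  then show "\<not> inQ s x \<Longrightarrow> \<not> inQ (Suc s) x" by simp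
next
  case False
  show "\<not> inQ s x \<Longrightarrow> \<not> inQ (Suc s) x"
    by (rule step_facts[OF False]) blast
qed

lemma in_before:
  assumes "inQ a x" "s \<le> a"
  shows "inQ s x"
proof -
  have "inQ (s + d) x \<Longrightarrow> inQ s x" for d
  proof (induction d)
    case 0 then show ?case by simp
  next
    case (Suc d)
    then show ?case using no_reentry[where s="s + d" and x=x] by auto
  qed
  then show ?thesis using assms by (metis le_add_diff_inverse)
qed

lemma leave:
  assumes "inQ s x" "\<not> inQ (Suc s) x"
  obtains i where "\<not> pmlf_done (st s)" "Qs s i \<noteq> []" "x = hd (Qs s i)" "x \<in> set (Qs s i)"
    "\<forall>l. Qs s l \<noteq> [] \<longrightarrow> i \<le> l" "p x \<le> (1+\<delta>) powr real_of_int (i+1)"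
    "rs (Suc s) x = p x" "\<forall>y. y \<noteq> x \<longrightarrow> rs (Suc s) y = rs s y"
proof -
  have nd: "\<not> pmlf_done (st s)"
  proof
    assume "pmlf_done (st s)"
    then have "st (Suc s) = st s" using step_done[of "st s" \<delta> p] by (simp add: st_Suc)
    then show False using assms by simp
  qed
  obtain i j where 1: "Qs s i \<noteq> []" "j = hd (Qs s i)" "j \<in> set (Qs s i)" "\<forall>l. Qs s l \<noteq> [] \<longrightarrow> i \<le> l"
    and 2: "\<forall>x. inQ (Suc s) x \<longleftrightarrow> inQ s x \<and> (x \<noteq> j \<or> p j > (1+\<delta>) powr real_of_int (i+1))"
    and 3: "\<forall>x. x \<noteq> j \<longrightarrow> rs (Suc s) x = rs s x"
    and 4: "p j \<le> (1+\<delta>) powr real_of_int (i+1) \<longrightarrow> rs (Suc s) j = p j"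
    by (rule step_facts[OF nd])
  have "\<not> (x \<noteq> j \<or> p j > (1+\<delta>) powr real_of_int (i+1))" using 2 assms by blast
  then have xj: "x = j" and pjle: "p j \<le> (1+\<delta>) powr real_of_int (i+1)" by auto
  show ?thesis
    apply (rule that[of i])
    using nd 1 3 4 xj pjle by simp_all
qed

lemma nonneg_all: "nonneg (Ss s)"
  using pinvD(7)[OF pinv_all[of s]] by (simp add: nonneg_def)

lemma work_at:
  assumes K: "pmlf_done (st K)" and nd: "\<not> pmlf_done (st a)"
  shows "work (Ss K) y (seg_start (Ss K) (Suc a)) = rs (Suc a) y" "a < K" "Suc a \<le> length (Ss K)"
proof -
  show aK: "a < K"
  proof (rule ccontr)
    assume "\<not> a < K"
    then have "st a = st K" using done_stay'[OF K, of a] by simp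
    then show False using K nd by simp
  qed
  have "\<forall>s'<Suc a. \<not> pmlf_done (st s')"
  proof (intro allI impI notI)
    fix s' assume "s' < Suc a" "pmlf_done (st s')"
    then have "st a = st s'" using done_stay'[of s' a] by simp
    then show False using nd \<open>pmlf_done (st s')\<close> by simp
  qed
  then have len: "length (Ss (Suc a)) = Suc a" by (rule len_sched)
  obtain ys where ys: "Ss K = Ss (Suc a) @ ys" using sched_grow[of "Suc a" K] aK by auto
  show "Suc a \<le> length (Ss K)" using len ys by simp
  have "work (Ss K) y (seg_start (Ss K) (Suc a)) = wsum (Ss K) y (Suc a)"
    using nonneg_all[of K] len ys by (intro work_seg_start) auto
  also have "\<dots> = wsum (Ss (Suc a)) y (Suc a)" using ys len wsum_prefix by simp
  also have "\<dots> = rs (Suc a) y" using pinvD(8)[OF pinv_all[of "Suc a"]] len by simp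
  finally show "work (Ss K) y (seg_start (Ss K) (Suc a)) = rs (Suc a) y" .
qed

lemma exists_leave:
  assumes K: "pmlf_done (st K)" and xn: "x < n"
  shows "\<exists>a<K. inQ a x \<and> \<not> inQ (Suc a) x"
proof (rule exists_change[where P = "\<lambda>a. inQ a x"])
  have "x \<in> set (init_queues \<delta> ph ord (i0 \<delta> ph x))"
    using xn setord by (auto simp: init_queues_def i0_def)
  then show "inQ 0 x" by (auto simp: pmlf_state_def)
  show "\<not> inQ K x" using K by (simp add: pmlf_done_def)
qed

lemma powr_succ: "(1+\<delta>) powr real_of_int (i+1) = (1+\<delta>) * (1+\<delta>) powr real_of_int i"
  using dpos by (simp add: powr_add)

lemma pair_bound:
  assumes K: "pmlf_done (st K)" and jk: "j \<noteq> k"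
    and lj: "inQ aj j" "\<not> inQ (Suc aj) j" and lk: "inQ ak k" "aj \<le> ak"
  shows "work (Ss K) k (seg_start (Ss K) (Suc aj)) \<le> min (p k) ((1+\<delta>) * p j)"
    "p j \<le> (1+\<delta>) * p k"
proof -
  obtain i where nd: "\<not> pmlf_done (st aj)" and "Qs aj i \<noteq> []" "j = hd (Qs aj i)" and ji: "j \<in> set (Qs aj i)"
    and mn: "\<forall>l. Qs aj l \<noteq> [] \<longrightarrow> i \<le> l" and pjle: "p j \<le> (1+\<delta>) powr real_of_int (i+1)"
    and "rs (Suc aj) j = p j" and rk: "\<forall>y. y \<noteq> j \<longrightarrow> rs (Suc aj) y = rs aj y"
    by (rule leave[OF lj])
  obtain l where kl: "k \<in> set (Qs aj l)" using in_before[OF lk] by blast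
  note inv = pinv_all[of aj]
  have k3: "(1+\<delta>) powr real_of_int l \<le> p k" "rs aj k < p k" using pinvD(3)[OF inv] kl by blast+
  have j3: "(1+\<delta>) powr real_of_int i \<le> p j" using pinvD(3)[OF inv] ji by blast
  have k6: "rs aj k \<le> (1+\<delta>) powr real_of_int (i+1)" using pinvD(6)[OF inv] ji kl by blast
  have il: "i \<le> l" using mn kl by (metis empty_iff list.set(1))
  have Bil: "(1+\<delta>) powr real_of_int i \<le> (1+\<delta>) powr real_of_int l" using il dpos by (intro powr_int_mono) auto
  have w: "work (Ss K) k (seg_start (Ss K) (Suc aj)) = rs aj k"
    using work_at(1)[OF K nd, of k] rk jk by simp
  have "rs aj k \<le> (1+\<delta>) * p j"
    using k6 j3 dpos unfolding powr_succ by (smt (verit) mult_left_mono)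
  then show "work (Ss K) k (seg_start (Ss K) (Suc aj)) \<le> min (p k) ((1+\<delta>) * p j)"
    using w k3 by simp
  show "p j \<le> (1+\<delta>) * p k"
    using pjle Bil k3(1) dpos unfolding powr_succ by (smt (verit) mult_left_mono)
qed

end


definition Dlb :: "nat \<Rightarrow> (nat \<Rightarrow> real) \<Rightarrow> real" where
  "Dlb n p = (\<Sum>j<n. \<Sum>k<n. min (p j) (p k) + (if j = k then p j else 0))"

lemma double_sum_sym:
  "(\<Sum>j<n. \<Sum>k<n. (f j k + f k j)) = 2 * (\<Sum>j<(n::nat). \<Sum>k<n. (f j k :: real))"
proof -
  have "(\<Sum>j<n. \<Sum>k<n. (f j k + f k j)) = (\<Sum>j<n. \<Sum>k<n. f j k) + (\<Sum>j<n. \<Sum>k<n. f k j)"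
    by (simp add: sum.distrib)
  also have "(\<Sum>j<n. \<Sum>k<n. f k j) = (\<Sum>j<n. \<Sum>k<n. f j k)" by (rule sum.swap)
  finally show ?thesis by simp
qed

lemma opt_lb:
  assumes feas: "feasible n p S'"
  shows "Dlb n p \<le> 2 * total_completion n p S'"
proof -
  define C where "C j = completion S' p j" for j
  have nn: "nonneg S'" using feas by (simp add: feasible_def nonneg_def)
  have tl0: "0 \<le> total_len S'"
    using seg_start_nonneg[OF nn, of "length S'"] by (simp add: total_len_def seg_start_def)
  have inC: "p j \<le> work S' j (C j)" if "j < n" for j
    unfolding C_def using feas that tl0 by (intro completion_in[of "total_len S'"]) (auto simp: feasible_def)
  have C0: "0 \<le> C j" if "j < n" for j
    unfolding C_def using feas that tl0 completion_le(2)[of "total_len S'" p j S'] by (auto simp: feasible_def)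
  have pair: "min (p j) (p k) + (if j = k then p j else 0) \<le> work S' k (C j) + work S' j (C k)"
    if "j < n" "k < n" for j k
  proof (cases "j = k")
    case True then show ?thesis using inC[OF that(1)] by simp
  next
    case False
    show ?thesis
    proof (cases "C j \<le> C k")
      case True
      have "p j \<le> work S' j (C k)" using inC[OF that(1)] work_mono[OF True, of S' j] by simp
      then show ?thesis using False work_nonneg[of S' k "C j"] by simp
    next
      case F2: False
      have "p k \<le> work S' k (C j)" using inC[OF that(2)] work_mono[of "C k" "C j" S' k] F2 by simp
      then show ?thesis using False work_nonneg[of S' j "C k"] by simp
    qed
  qed
  have "Dlb n p \<le> (\<Sum>j<n. \<Sum>k<n. work S' k (C j) + work S' j (C k))"
    unfolding Dlb_def by (intro sum_mono) (use pair in auto)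
  also have "\<dots> = 2 * (\<Sum>j<n. \<Sum>k<n. work S' k (C j))"
    by (rule double_sum_sym[where f = "\<lambda>j k. work S' k (C j)"])
  also have "\<dots> \<le> 2 * (\<Sum>j<n. C j)"
    using sum_work_le[OF nn C0] by (auto intro!: sum_mono)
  finally show ?thesis by (simp add: total_completion_def C_def)
qed

lemma alg_ub:
  assumes nn: "nonneg S" and pc: "\<forall>m<length S. \<exists>x<n. fst (S!m) = Some x"
    and tl: "\<forall>j<n. p j \<le> work S j (total_len S)"
    and ub: "\<forall>j<n. \<forall>t. work S j t \<le> p j"
    and pair: "\<forall>j<n. \<forall>k<n. j \<noteq> k \<longrightarrow>
       work S k (completion S p j) + work S j (completion S p k) \<le> (2+\<delta>) * min (p j) (p k)"
    and d: "0 \<le> \<delta>" and pn: "\<forall>j<n. 0 \<le> p j"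
  shows "2 * total_completion n p S \<le> (2 + 2*\<delta>) * Dlb n p"
proof -
  define C where "C j = completion S p j" for j
  have tl0: "0 \<le> total_len S"
    using seg_start_nonneg[OF nn, of "length S"] by (simp add: total_len_def seg_start_def)
  have Cle: "C j \<le> total_len S" "0 \<le> C j" if "j < n" for j
    unfolding C_def using tl that tl0 completion_le by auto
  have sumC: "(\<Sum>k<n. work S k (C j)) = C j" if "j < n" for j
    using sum_work_eq[OF nn Cle(2)[OF that] pc] Cle[OF that] by simp
  have trm: "work S k (C j) + work S j (C k) \<le> (2 + 2*\<delta>) * (min (p j) (p k) + (if j = k then p j else 0))"
    if "j < n" "k < n" for j k
  proof (cases "j = k")
    case True
    have "work S j (C j) \<le> p j" using ub that by auto
    moreover have "0 \<le> p j" using pn that by auto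
    ultimately show ?thesis using True d by (simp add: algebra_simps) (smt (verit) mult_nonneg_nonneg)
  next
    case False
    have "work S k (C j) + work S j (C k) \<le> (2+\<delta>) * min (p j) (p k)"
      using pair that False unfolding C_def by auto
    moreover have "0 \<le> min (p j) (p k)" using pn that by auto
    ultimately show ?thesis using False d by (smt (verit) mult_right_mono)
  qed
  have "2 * total_completion n p S = 2 * (\<Sum>j<n. \<Sum>k<n. work S k (C j))"
    unfolding total_completion_def C_def[symmetric] using sumC by simp
  also have "\<dots> = (\<Sum>j<n. \<Sum>k<n. work S k (C j) + work S j (C k))"
    by (rule double_sum_sym[where f = "\<lambda>j k. work S k (C j)", symmetric])
  also have "\<dots> \<le> (\<Sum>j<n. \<Sum>k<n. (2 + 2*\<delta>) * (min (p j) (p k) + (if j = k then p j else 0)))"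
    by (intro sum_mono) (use trm in auto)
  also have "\<dots> = (2 + 2*\<delta>) * Dlb n p"
    unfolding Dlb_def by (simp add: sum_distrib_left)
  finally show ?thesis .
qed


lemma npreempt_le_mc:
  assumes nn: "nonneg S"
  shows "npreempt S p j \<le> mc S p j"
  unfolding npreempt_def mc_def
proof (rule card_mono)
  show "finite {m. m < length S \<and> fst (S ! m) = Some j \<and> wsum S j (Suc m) < p j}" by simp
  show "{m. Suc m < length S \<and> fst (S ! m) = Some j \<and> fst (S ! Suc m) \<noteq> Some j \<and> work S j (seg_end S m) < p j}
    \<subseteq> {m. m < length S \<and> fst (S ! m) = Some j \<and> wsum S j (Suc m) < p j}"
  proof
    fix m assume "m \<in> {m. Suc m < length S \<and> fst (S ! m) = Some j \<and> fst (S ! Suc m) \<noteq> Some j \<and> work S j (seg_end S m) < p j}"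
    then have m: "Suc m < length S" "fst (S ! m) = Some j" "work S j (seg_end S m) < p j" by auto
    have "seg_end S m = seg_start S (Suc m)" by (simp add: seg_end_def seg_start_Suc)
    then have "work S j (seg_end S m) = wsum S j (Suc m)" using work_seg_start[OF nn, of "Suc m"] m(1) by simp
    then show "m \<in> {m. m < length S \<and> fst (S ! m) = Some j \<and> wsum S j (Suc m) < p j}" using m by simp
  qed
qed

lemma log_bound:
  assumes d: "(0::real) < \<delta>" and x: "1 \<le> x"
  shows "log (1+\<delta>) x \<le> (1+\<delta>) * (log 2 x / \<delta>)"
proof -
  have lnx: "0 \<le> ln x" using x by simp
  have l1: "\<delta> / (1+\<delta>) \<le> ln (1+\<delta>)"
  proof -
    have "ln (1 / (1+\<delta>)) \<le> 1 / (1+\<delta>) - 1" using d by (intro ln_le_minus_one) simp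
    moreover have "ln (1 / (1+\<delta>)) = - ln (1+\<delta>)" using d by (simp add: ln_div)
    moreover have "1 / (1+\<delta>) - 1 = - (\<delta> / (1+\<delta>))" using d by (simp add: field_simps)
    ultimately show ?thesis by linarith
  qed
  have l2: "ln 2 \<le> (1::real)" using ln_le_minus_one[of 2] by simp
  have l2p: "0 < ln (2::real)" by simp
  have "log (1+\<delta>) x = ln x / ln (1+\<delta>)" by (simp add: log_def)
  also have "\<dots> \<le> ln x / (\<delta> / (1+\<delta>))"
    using l1 d lnx by (intro divide_left_mono) (auto intro: mult_pos_pos)
  also have "\<dots> = (1+\<delta>) * (ln x / \<delta>)" using d by (simp add: field_simps)
  also have "\<dots> \<le> (1+\<delta>) * ((ln x / ln 2) / \<delta>)"
  proof -
    have "ln x \<le> ln x / ln 2" using l2 l2p lnx by (simp add: le_divide_eq mult_left_le)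
    then show ?thesis using d by (intro mult_left_mono divide_right_mono) auto
  qed
  also have "\<dots> = (1+\<delta>) * (log 2 x / \<delta>)" by (simp add: log_def)
  finally show ?thesis .
qed

context
  fixes \<delta> :: real and p ph :: "nat \<Rightarrow> real" and n :: nat and ord :: "nat list"
  assumes dpos: "\<delta> > 0" and pj: "\<forall>j<n. 1 \<le> p j \<and> 0 < ph j \<and> ph j \<le> p j"
    and dist: "distinct ord" and setord: "set ord = {..<n}"
begin

abbreviation "st' s \<equiv> pmlf_state \<delta> p ph ord s"
abbreviation "Qs' s \<equiv> fst (st' s)"
abbreviation "rs' s \<equiv> fst (snd (st' s))"
abbreviation "Ss' s \<equiv> snd (snd (st' s))"

lemmas P4 = pinv_all[OF dpos pj dist setord] terminates[OF dpos pj dist setord]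
  nonneg_all[OF dpos pj dist setord] work_at[OF dpos pj dist setord]
  exists_leave[OF dpos pj dist setord] leave[OF dpos pj dist setord]
  pair_bound[OF dpos pj dist setord] in_before[OF dpos pj dist setord]

lemma main_facts:
  assumes K: "pmlf_done (st' K)"
  shows "feasible n p (Ss' K)"
    "\<forall>j<n. \<forall>k<n. j \<noteq> k \<longrightarrow> work (Ss' K) k (completion (Ss' K) p j) + work (Ss' K) j (completion (Ss' K) p k)
        \<le> (2+\<delta>) * min (p j) (p k)"
    "\<forall>j<n. real (npreempt (Ss' K) p j) \<le> (1+\<delta>) * (1 + log 2 (p j / ph j) / \<delta>)"
    "\<forall>j<n. \<forall>t. work (Ss' K) j t \<le> p j"
proof -
  define S where "S = Ss' K"
  note inv = P4(1)[of K]
  have nn: "nonneg S" unfolding S_def by (rule P4(3))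
  have rK: "rs' K x = p x" if "x < n" for x
    using pinvD(4)[OF inv] K that by (simp add: pmlf_done_def)
  have wK: "work S x (total_len S) = p x" if "x < n" for x
  proof -
    have "total_len S = seg_start S (length S)" by (simp add: total_len_def seg_start_def)
    then have "work S x (total_len S) = wsum S x (length S)" using work_seg_start[OF nn] by simp
    also have "\<dots> = rs' K x" using pinvD(8)[OF inv] unfolding S_def by simp
    finally show ?thesis using rK that by simp
  qed
  have ub: "work S j t \<le> p j" if "j < n" for j t
  proof -
    have "work S j t \<le> wsum S j (length S)" by (rule work_le_wsum[OF nn])
    also have "\<dots> = rs' K j" using pinvD(8)[OF inv] unfolding S_def by simp
    finally show ?thesis using rK that by simp
  qed
  then show "\<forall>j<n. \<forall>t. work (Ss' K) j t \<le> p j" unfolding S_def by blast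
  show "feasible n p (Ss' K)"
    using nn wK unfolding S_def feasible_def nonneg_def by simp
  have Cle: "completion S p x \<le> seg_start S (Suc a)"
    if lx: "\<exists>l. x \<in> set (Qs' a l)" "\<nexists>l. x \<in> set (Qs' (Suc a) l)" for x a
  proof -
    obtain i where nd: "\<not> pmlf_done (st' a)" and "Qs' a i \<noteq> []" and "x = hd (Qs' a i)" and "x \<in> set (Qs' a i)"
      and "\<forall>l. Qs' a l \<noteq> [] \<longrightarrow> i \<le> l" and "p x \<le> (1+\<delta>) powr real_of_int (i+1)"
      and rx: "rs' (Suc a) x = p x" and "\<forall>y. y \<noteq> x \<longrightarrow> rs' (Suc a) y = rs' a y"
      by (rule P4(8)[OF lx])
    have len: "Suc a \<le> length S" using P4(6)[OF K nd] unfolding S_def .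
    have w: "work S x (seg_start S (Suc a)) = p x" using P4(4)[OF K nd, of x] rx unfolding S_def by simp
    show ?thesis
      by (rule completion_le(1)) (use seg_start_nonneg[OF nn len] w in auto)
  qed
  have ord_pair: "work S k (completion S p j) + work S j (completion S p k) \<le> (2+\<delta>) * min (p j) (p k)"
    if jn: "j < n" and kn: "k < n" and jk: "j \<noteq> k"
      and lj: "\<exists>l. j \<in> set (Qs' aj l)" "\<nexists>l. j \<in> set (Qs' (Suc aj) l)"
      and lk: "\<exists>l. k \<in> set (Qs' ak l)" and ajk: "aj \<le> ak" for j k aj ak
  proof -
    have "work S k (completion S p j) \<le> work S k (seg_start S (Suc aj))"
      by (rule work_mono[OF Cle[OF lj]])
    also have "\<dots> \<le> min (p k) ((1+\<delta>) * p j)" using P4(9)[OF K jk lj lk ajk] unfolding S_def .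
    finally have 1: "work S k (completion S p j) \<le> min (p k) ((1+\<delta>) * p j)" .
    have 2: "work S j (completion S p k) \<le> p j" using ub jn by blast
    have 3: "p j \<le> (1+\<delta>) * p k" using P4(10)[OF K jk lj lk ajk] .
    have pp: "0 \<le> p j" "0 \<le> p k" using pj jn kn by force+
    have 1: "work S k (completion S p j) \<le> p k" "work S k (completion S p j) \<le> (1+\<delta>) * p j"
      using 1 by simp_all
    have e1: "(2+\<delta>) * p j = p j + (1+\<delta>) * p j" "(2+\<delta>) * p k = p k + (1+\<delta>) * p k"
      by (simp_all add: algebra_simps)
    show ?thesis
    proof (cases "p j \<le> p k")
      case True
      then have "min (p j) (p k) = p j" by simp
      then show ?thesis using 1 2 e1 by linarith
    next
      case False
      then have "min (p j) (p k) = p k" by simp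
      then show ?thesis using 1 2 3 e1 by linarith
    qed
  qed
  show "\<forall>j<n. \<forall>k<n. j \<noteq> k \<longrightarrow> work (Ss' K) k (completion (Ss' K) p j) + work (Ss' K) j (completion (Ss' K) p k)
        \<le> (2+\<delta>) * min (p j) (p k)"
  proof (intro allI impI)
    fix j k assume jn: "j < n" and kn: "k < n" and jk: "j \<noteq> k"
    obtain aj where aj: "aj < K" "\<exists>l. j \<in> set (Qs' aj l)" "\<nexists>l. j \<in> set (Qs' (Suc aj) l)"
      using P4(7)[OF K jn] by blast
    obtain ak where ak: "ak < K" "\<exists>l. k \<in> set (Qs' ak l)" "\<nexists>l. k \<in> set (Qs' (Suc ak) l)"
      using P4(7)[OF K kn] by blast
    have neq: "aj \<noteq> ak"
    proof
      assume e: "aj = ak"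
      have ak2: "\<exists>l. k \<in> set (Qs' aj l)" "\<nexists>l. k \<in> set (Qs' (Suc aj) l)" using ak e by simp_all
      obtain i where "\<not> pmlf_done (st' aj)" and i1: "Qs' aj i \<noteq> []" and i2: "j = hd (Qs' aj i)" and "j \<in> set (Qs' aj i)"
      and i3: "\<forall>l. Qs' aj l \<noteq> [] \<longrightarrow> i \<le> l" and "p j \<le> (1+\<delta>) powr real_of_int (i+1)"
      and "rs' (Suc aj) j = p j" and "\<forall>y. y \<noteq> j \<longrightarrow> rs' (Suc aj) y = rs' aj y"
        by (rule P4(8)[OF aj(2,3)])
      obtain i' where "\<not> pmlf_done (st' aj)" and i1': "Qs' aj i' \<noteq> []" and i2': "k = hd (Qs' aj i')" and "k \<in> set (Qs' aj i')"
      and i3': "\<forall>l. Qs' aj l \<noteq> [] \<longrightarrow> i' \<le> l" and "p k \<le> (1+\<delta>) powr real_of_int (i'+1)"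
      and "rs' (Suc aj) k = p k" and "\<forall>y. y \<noteq> k \<longrightarrow> rs' (Suc aj) y = rs' aj y"
        by (rule P4(8)[OF ak2])
      have "i \<le> i'" using i3 i1' by blast
      moreover have "i' \<le> i" using i3' i1 by blast
      ultimately have "i = i'" by simp
      then show False using i2 i2' jk by simp
    qed
    show "work (Ss' K) k (completion (Ss' K) p j) + work (Ss' K) j (completion (Ss' K) p k)
        \<le> (2+\<delta>) * min (p j) (p k)"
    proof (cases "aj < ak")
      case True
      then show ?thesis using ord_pair[OF jn kn jk aj(2,3) ak(2)] unfolding S_def by simp
    next
      case False
      then have "ak \<le> aj" using neq by simp
      then show ?thesis using ord_pair[OF kn jn _ ak(2,3) aj(2)] jk unfolding S_def
        by (simp add: add.commute min.commute)
    qed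
  qed
  show "\<forall>j<n. real (npreempt (Ss' K) p j) \<le> (1+\<delta>) * (1 + log 2 (p j / ph j) / \<delta>)"
  proof (intro allI impI)
    fix j assume jn: "j < n"
    have pp: "1 \<le> p j" "0 < ph j" "ph j \<le> p j" using pj jn by auto
    have "real (npreempt S p j) \<le> real (mc S p j)" using npreempt_le_mc[OF nn] by simp
    moreover have "real_of_int (int (mc S p j) + i0 \<delta> ph j) \<le> log (1+\<delta>) (p j)"
      using pinvD(9)[OF inv] jn unfolding S_def by blast
    moreover have "log (1+\<delta>) (ph j) - 1 < real_of_int (i0 \<delta> ph j)"
      unfolding i0_def by linarith
    moreover have "log (1+\<delta>) (p j / ph j) = log (1+\<delta>) (p j) - log (1+\<delta>) (ph j)"
      using pp dpos by (simp add: log_def ln_div diff_divide_distrib)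
    moreover have "log (1+\<delta>) (p j / ph j) \<le> (1+\<delta>) * (log 2 (p j / ph j) / \<delta>)"
      using pp dpos by (intro log_bound) auto
    ultimately have "real (npreempt S p j) \<le> 1 + (1+\<delta>) * (log 2 (p j / ph j) / \<delta>)"
      by simp
    also have "\<dots> \<le> (1+\<delta>) * (1 + log 2 (p j / ph j) / \<delta>)"
      using dpos by (simp add: algebra_simps)
    finally show "real (npreempt (Ss' K) p j) \<le> (1+\<delta>) * (1 + log 2 (p j / ph j) / \<delta>)"
      unfolding S_def .
  qed
qed

end

theorem mainTheorem1:
  fixes \<delta> :: real
  assumes "\<delta> > 0"
  shows "\<exists>C>0. \<forall>(n::nat) (p::nat \<Rightarrow> real) (ph::nat \<Rightarrow> real) (ord::nat list).
     (\<forall>j<n. 1 \<le> p j \<and> 0 < ph j \<and> ph j \<le> p j) \<and> distinct ord \<and> set ord = {..<n} \<longrightarrow>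
       (\<exists>k. pmlf_done (pmlf_state \<delta> p ph ord k)) \<and>
       (\<forall>k. pmlf_done (pmlf_state \<delta> p ph ord k) \<longrightarrow>
          (let S = pmlf_sched (pmlf_state \<delta> p ph ord k) in
             feasible n p S \<and>
             (\<forall>S'. feasible n p S' \<longrightarrow> total_completion n p S \<le> (2 + 2 * \<delta>) * total_completion n p S') \<and>
             (\<forall>j<n. real (npreempt S p j) \<le> C * (1 + log 2 (p j / ph j) / \<delta>))))"
proof (rule exI[of _ "1 + \<delta>"], intro conjI allI impI)
  show "0 < 1 + \<delta>" using assms by simp
  fix n :: nat and p ph :: "nat \<Rightarrow> real" and ord :: "nat list"
  assume H: "(\<forall>j<n. 1 \<le> p j \<and> 0 < ph j \<and> ph j \<le> p j) \<and> distinct ord \<and> set ord = {..<n}"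
  have pj: "\<forall>j<n. 1 \<le> p j \<and> 0 < ph j \<and> ph j \<le> p j" and dist: "distinct ord" and setord: "set ord = {..<n}"
    using H by auto
  show "\<exists>k. pmlf_done (pmlf_state \<delta> p ph ord k)"
    by (rule terminates[OF assms pj dist setord])
  fix k assume K: "pmlf_done (pmlf_state \<delta> p ph ord k)"
  define S where "S = snd (snd (pmlf_state \<delta> p ph ord k))"
  note F = main_facts[OF assms pj dist setord K, folded S_def]
  have nn: "nonneg S" unfolding S_def by (rule nonneg_all[OF assms pj dist setord])
  have pc: "\<forall>m<length S. \<exists>x<n. fst (S!m) = Some x"
    using pinvD(7)[OF pinv_all[OF assms pj dist setord, of k]] unfolding S_def by blast
  have tl: "\<forall>j<n. p j \<le> work S j (total_len S)" using F(1) by (simp add: feasible_def)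
  have pn: "\<forall>j<n. 0 \<le> p j" using pj by force
  have A: "2 * total_completion n p S \<le> (2 + 2*\<delta>) * Dlb n p"
    by (rule alg_ub[OF nn pc tl F(4) F(2)]) (use assms pn in auto)
  have "feasible n p S \<and>
        (\<forall>S'. feasible n p S' \<longrightarrow> total_completion n p S \<le> (2 + 2 * \<delta>) * total_completion n p S') \<and>
        (\<forall>j<n. real (npreempt S p j) \<le> (1 + \<delta>) * (1 + log 2 (p j / ph j) / \<delta>))"
  proof (intro conjI allI impI)
    show "feasible n p S" by (rule F(1))
    fix S' assume fs: "feasible n p S'"
    have "Dlb n p \<le> 2 * total_completion n p S'" by (rule opt_lb[OF fs])
    then have "(2 + 2*\<delta>) * Dlb n p \<le> (2 + 2*\<delta>) * (2 * total_completion n p S')"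
      using assms by (intro mult_left_mono) auto
    then show "total_completion n p S \<le> (2 + 2 * \<delta>) * total_completion n p S'"
      using A by (simp add: algebra_simps)
  next
    fix j assume "j < n"
    then show "real (npreempt S p j) \<le> (1 + \<delta>) * (1 + log 2 (p j / ph j) / \<delta>)" using F(3) by blast
  qed
  then show "let S = pmlf_sched (pmlf_state \<delta> p ph ord k) in
             feasible n p S \<and>
             (\<forall>S'. feasible n p S' \<longrightarrow> total_completion n p S \<le> (2 + 2 * \<delta>) * total_completion n p S') \<and>
             (\<forall>j<n. real (npreempt S p j) \<le> (1 + \<delta>) * (1 + log 2 (p j / ph j) / \<delta>))"
    unfolding Let_def pmlf_sched_def S_def .
qed

end
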